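(* Let $G$ be the graph defined below. An order automorphism of $\mathbb Q$ is a bijection $\gamma\colon\mathbb Q\to\mathbb Q$ with $q<r \iff \gamma(q)<\gamma(r)$. For such $\gamma$ define $\gamma_\uparrow, \gamma_\downarrow\colon V\to V$ by $\gamma_\uparrow(q^+)=(\gamma(q))^+$, $\gamma_\uparrow(q^-)=(\gamma(q))^-$, $\gamma_\downarrow(q^+)=(-\gamma(q))^-$, $\gamma_\downarrow(q^-)=(-\gamma(q))^+$. Then every $\gamma_\uparrow$ and every $\gamma_\downarrow$ is an automorphism of $G$, and conversely every automorphism of $G$ equals $\gamma_\uparrow$ or $\gamma_\downarrow$ for some order automorphism $\gamma$ of $\mathbb Q$.
   Context: Let $\mathbb Q^+=\{q^+: q\in\mathbb Q\}$ and $\mathbb Q^-=\{q^-: q\in\mathbb Q\}$ be two disjoint copies of $\mathbb Q$. $G$ is the simple undirected graph with vertex set $V=\mathbb Q^+\cup\mathbb Q^-$ in which the edges are exactly the pairs $\{q^+,r^-\}$ with $q,r\in\mathbb Q$ and $q<r$ (there are no edges inside $\mathbb Q^+$ or inside $\mathbb Q^-$). *)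

theory Defs
  imports Main "HOL.Rat"
begin

text \<open>Vertices: the disjoint union of two copies of Q. We represent q^+ as Plus q and q^- as Minus q.\<close>
datatype vert = Plus rat | Minus rat

fun G_edge :: "vert \<Rightarrow> vert \<Rightarrow> bool" where
  "G_edge (Plus q) (Minus r) = (q < r)"
| "G_edge (Minus r) (Plus q) = (q < r)"
| "G_edge _ _ = False"

definition graph_aut :: "(vert \<Rightarrow> vert) \<Rightarrow> bool" where
  "graph_aut f \<longleftrightarrow> bij f \<and> (\<forall>u v. G_edge u v \<longleftrightarrow> G_edge (f u) (f v))"

definition order_aut :: "(rat \<Rightarrow> rat) \<Rightarrow> bool" where
  "order_aut g \<longleftrightarrow> bij g \<and> (\<forall>q r. q < r \<longleftrightarrow> g q < g r)"

fun gamma_up :: "(rat \<Rightarrow> rat) \<Rightarrow> vert \<Rightarrow> vert" where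
  "gamma_up g (Plus q) = Plus (g q)"
| "gamma_up g (Minus q) = Minus (g q)"

fun gamma_down :: "(rat \<Rightarrow> rat) \<Rightarrow> vert \<Rightarrow> vert" where
  "gamma_down g (Plus q) = Minus (- g q)"
| "gamma_down g (Minus q) = Plus (- g q)"

end

theory Submission
  imports Defs
begin

fun side :: "vert \<Rightarrow> bool" where
  "side (Plus _) = True" | "side (Minus _) = False"

fun val :: "vert \<Rightarrow> rat" where
  "val (Plus x) = x" | "val (Minus x) = x"

lemma common_iff: "(\<exists>w. G_edge u w \<and> G_edge v w) \<longleftrightarrow> side u = side v"
proof (cases u; cases v)
  fix q q' assume "u = Plus q" "v = Plus q'"
  moreover have "G_edge u (Minus (max q q' + 1)) \<and> G_edge v (Minus (max q q' + 1))"
    using \<open>u = Plus q\<close> \<open>v = Plus q'\<close> by auto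
  ultimately show ?thesis by (metis side.simps(1))
next
  fix q q' assume "u = Minus q" "v = Minus q'"
  moreover have "G_edge u (Plus (min q q' - 1)) \<and> G_edge v (Plus (min q q' - 1))"
    using \<open>u = Minus q\<close> \<open>v = Minus q'\<close> by auto
  ultimately show ?thesis by (metis side.simps(2))
next
  fix q q' assume a: "u = Plus q" "v = Minus q'"
  have "\<not> G_edge u w \<or> \<not> G_edge v w" for w using a by (cases w) auto
  then show ?thesis using a by auto
next
  fix q q' assume a: "u = Minus q" "v = Plus q'"
  have "\<not> G_edge u w \<or> \<not> G_edge v w" for w using a by (cases w) auto
  then show ?thesis using a by auto
qed

lemma side_pres:
  assumes "graph_aut f" shows "side (f u) = side (f v) \<longleftrightarrow> side u = side v"
proof -
  have b: "bij f" and e: "\<And>u v. G_edge u v \<longleftrightarrow> G_edge (f u) (f v)"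
    using assms unfolding graph_aut_def by auto
  have "(\<exists>w. G_edge (f u) w \<and> G_edge (f v) w) \<longleftrightarrow> (\<exists>w. G_edge u w \<and> G_edge v w)"
  proof
    assume "\<exists>w. G_edge (f u) w \<and> G_edge (f v) w"
    then obtain w where w: "G_edge (f u) w" "G_edge (f v) w" by blast
    obtain w' where "w = f w'" using b by (metis bij_pointE)
    then show "\<exists>w. G_edge u w \<and> G_edge v w" using w e by blast
  next
    assume "\<exists>w. G_edge u w \<and> G_edge v w"
    then show "\<exists>w. G_edge (f u) w \<and> G_edge (f v) w" using e by blast
  qed
  then show ?thesis using common_iff by blast
qed

lemma key:
  fixes a b :: "rat \<Rightarrow> rat"
  assumes s: "surj a" and h: "\<And>q r. q < r \<longleftrightarrow> a q < b r"
  shows "a = b \<and> order_aut a"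
proof -
  have sm: "strict_mono a"
  proof (rule strict_monoI)
    fix q q' :: rat assume "q < q'"
    let ?r = "(q + q') / 2"
    have "q < ?r" "\<not> q' < ?r" using \<open>q < q'\<close> by (auto simp: field_simps)
    then have "a q < b ?r" "\<not> a q' < b ?r" using h by blast+
    then show "a q < a q'" by linarith
  qed
  have eq: "a q = b q" for q
  proof (rule ccontr)
    assume ne: "a q \<noteq> b q"
    have "\<not> a q < b q" using h[of q q] by simp
    then have gt: "b q < a q" using ne by linarith
    let ?x = "(a q + b q) / 2"
    obtain q' where q': "a q' = ?x" using s by (metis surjD)
    have "b q < a q'" "a q' < a q" using gt q' by (auto simp: field_simps)
    then have "\<not> q' < q" using h[of q' q] by simp
    then have "q \<le> q'" by simp
    then have "a q \<le> a q'" using sm by (metis order.strict_implies_order order_refl strict_mono_def order_le_less)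
    then show False using \<open>a q' < a q\<close> by simp
  qed
  have "order_aut a" unfolding order_aut_def
    using sm s strict_mono_imp_inj_on[OF sm] strict_mono_less[OF sm] by (auto simp: bij_def)
  then show ?thesis using eq by auto
qed

theorem mainTheorem2:
  shows "(\<forall>g. order_aut g \<longrightarrow> graph_aut (gamma_up g) \<and> graph_aut (gamma_down g))
       \<and> (\<forall>f. graph_aut f \<longrightarrow> (\<exists>g. order_aut g \<and> (f = gamma_up g \<or> f = gamma_down g)))"
proof (intro conjI allI impI)
  fix g assume og: "order_aut g"
  then have bg: "bij g" and mg: "\<And>q r. q < r \<longleftrightarrow> g q < g r" unfolding order_aut_def by auto
  have "bij (gamma_up g)"
  proof (rule bijI)
    show "inj (gamma_up g)" using bij_is_inj[OF bg]
      by (auto simp: inj_def elim!: gamma_up.elims)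
    show "surj (gamma_up g)"
    proof (rule surjI)
      fix v show "gamma_up g (case v of Plus x \<Rightarrow> Plus (inv g x) | Minus x \<Rightarrow> Minus (inv g x)) = v"
        using bij_inv_eq_iff[OF bg] by (cases v) auto
    qed
  qed
  moreover have "G_edge u v \<longleftrightarrow> G_edge (gamma_up g u) (gamma_up g v)" for u v
    by (cases u; cases v) (simp_all add: mg[symmetric])
  ultimately show "graph_aut (gamma_up g)" unfolding graph_aut_def by blast
  have "bij (gamma_down g)"
  proof (rule bijI)
    show "inj (gamma_down g)" using bij_is_inj[OF bg]
      by (auto simp: inj_def elim!: gamma_down.elims)
    show "surj (gamma_down g)"
    proof (rule surjI)
      fix v show "gamma_down g (case v of Plus x \<Rightarrow> Minus (inv g (-x)) | Minus x \<Rightarrow> Plus (inv g (-x))) = v"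
        using bij_is_surj[OF bg] by (cases v) (auto simp: surj_f_inv_f)
    qed
  qed
  moreover have "G_edge u v \<longleftrightarrow> G_edge (gamma_down g u) (gamma_down g v)" for u v
    by (cases u; cases v) (simp_all add: mg[symmetric])
  ultimately show "graph_aut (gamma_down g)" unfolding graph_aut_def by blast
next
  fix f assume fa: "graph_aut f"
  have b: "bij f" and e: "\<And>u v. G_edge u v \<longleftrightarrow> G_edge (f u) (f v)"
    using fa unfolding graph_aut_def by auto
  have sp: "\<And>q. side (f (Plus q)) = side (f (Plus 0))"
    using side_pres[OF fa, of "Plus _" "Plus 0"] by (simp only: side.simps)
  have sm: "\<And>q. side (f (Minus q)) = (\<not> side (f (Plus 0)))"
    using side_pres[OF fa, of "Minus _" "Plus 0"] by (simp only: side.simps) blast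
  show "\<exists>g. order_aut g \<and> (f = gamma_up g \<or> f = gamma_down g)"
  proof (cases "side (f (Plus 0))")
    case True
    define a where "a q = val (f (Plus q))" for q
    define bb where "bb q = val (f (Minus q))" for q
    have fp: "f (Plus q) = Plus (a q)" for q using sp[of q] True unfolding a_def
      by (cases "f (Plus q)") auto
    have fm: "f (Minus q) = Minus (bb q)" for q using sm[of q] True unfolding bb_def
      by (cases "f (Minus q)") auto
    have h: "q < r \<longleftrightarrow> a q < bb r" for q r
      using e[of "Plus q" "Minus r"] fp fm by simp
    have "surj a" unfolding surj_def
    proof
      fix y
      obtain v where v: "f v = Plus y" using surjD[OF bij_is_surj[OF b], of "Plus y"] by metis
      moreover have "v \<noteq> Minus r" for r using v fm[of r] by force
      ultimately obtain q where "v = Plus q" by (cases v) blast+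
      then have "a q = y" using v fp by simp
      then show "\<exists>q. y = a q" by metis
    qed
    from key[OF this h] have k: "a = bb" "order_aut a" by auto
    have "f = gamma_up a"
    proof
      fix v show "f v = gamma_up a v"
      proof (cases v)
        case (Plus q) then show ?thesis using fp[of q] by simp
      next
        case (Minus q) then show ?thesis using fm[of q] k(1) by simp
      qed
    qed
    then show ?thesis using k by blast
  next
    case False
    define a where "a q = - val (f (Plus q))" for q
    define bb where "bb q = - val (f (Minus q))" for q
    have fp: "f (Plus q) = Minus (- a q)" for q using sp[of q] False unfolding a_def
      by (cases "f (Plus q)") auto
    have fm: "f (Minus q) = Plus (- bb q)" for q using sm[of q] False unfolding bb_def
      by (cases "f (Minus q)") auto
    have h: "q < r \<longleftrightarrow> a q < bb r" for q r
      using e[of "Plus q" "Minus r"] fp fm by simp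
    have "surj a" unfolding surj_def
    proof
      fix y
      obtain v where v: "f v = Minus (- y)" using surjD[OF bij_is_surj[OF b], of "Minus (- y)"] by metis
      moreover have "v \<noteq> Minus r" for r using v fm[of r] by force
      ultimately obtain q where "v = Plus q" by (cases v) blast+
      then have "a q = y" using v fp by simp
      then show "\<exists>q. y = a q" by metis
    qed
    from key[OF this h] have k: "a = bb" "order_aut a" by auto
    have "f = gamma_down a"
    proof
      fix v show "f v = gamma_down a v"
      proof (cases v)
        case (Plus q) then show ?thesis using fp[of q] by simp
      next
        case (Minus q) then show ?thesis using fm[of q] k(1) by simp
      qed
    qed
    then show ?thesis using k by blast
  qed
qed

end
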